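(* Let $\mathcal O$ be a regular family of $\sigma$-trees, let $\mathbf A$ be a $\sigma$-tree and $\phi:\mathbf A\to\mathbf D(\mathcal O)$ a homomorphism. Then for every $a\in V(\mathbf A)$, $(\mathbf A,a)\in\phi(a)$.
   Context: A type $\sigma$ is a finite set of relation symbols with arities; a $\sigma$-structure $\mathbf A$ is a finite set $V(\mathbf A)$ with an $r$-ary relation $R(\mathbf A)$ for each $R$ of arity $r$; homomorphisms are relation-preserving maps. $\mathrm{Inc}(\mathbf A)$ is the bipartite multigraph with parts $V(\mathbf A)$ and the blocks $(R,(x_1,\dots,x_r))$, $(x_1,\dots,x_r)\in R(\mathbf A)$, with one edge joining $x_i$ to the block for each $i$. $\mathbf A$ is a $\sigma$-forest if $\mathrm{Inc}(\mathbf A)$ has no cycles or parallel edges, a $\sigma$-tree if moreover connected. $\mathbb F,\mathbb T$: isomorphism classes of $\sigma$-forests/trees; $\mathbb F_{\mathrm r},\mathbb T_{\mathrm r}$: rooted ones $(\mathbf A,a)$. $(\mathbf A,a)+(\mathbf B,b)$: disjoint union with $a,b$ identified as new root; $[(\mathbf A,a)]$ forgets the root; $\mathbf T_0$ is the one-vertex rooted tree with empty relations. For $\mathcal O\subseteq\mathbb F$, $\mathcal O-(\mathbf A,a)=\{(\mathbf B,b)\in\mathbb F_{\mathrm r}:[(\mathbf A,a)+(\mathbf B,b)]\in\mathcal O\}$; $\mathcal O$ is regular if there are finitely many distinct such sets. Concatenation: $\mathbf C(R,(\mathbf A_1,x_1),\dots,(\mathbf A_r,x_r))$ is the disjoint union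 of the $\mathbf A_i$ with $(x_1,\dots,x_r)$ added to $R$. $\mathbf D(\mathcal O)$ has as vertices the sets $\mathcal V\subseteq\mathbb T_{\mathrm r}$ with (i) $\mathbf T_0\in\mathcal V$; (ii) $(\mathbf A,a)\in\mathcal V$ implies $\mathbf A\notin\mathcal O$; (iii) $\mathcal V=\mathbb T_{\mathrm r}\setminus\bigcup_{(\mathbf A,a)\in\mathcal H}(\mathcal O-(\mathbf A,a))$ for some family $\mathcal H$ of rooted trees. For $R$ of arity $r$, $(\mathcal V_1,\dots,\mathcal V_r)\in R(\mathbf D(\mathcal O))$ iff for all $(\mathbf A_i,a_i)\in\mathcal V_i$, with $\mathbf T=\mathbf C(R,(\mathbf A_1,a_1),\dots,(\mathbf A_r,a_r))$, $(\mathbf T,a_j)\in\mathcal V_j$ for all $j$. *)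

theory Defs
  imports Main
begin

text \<open>A type sigma is modelled by a finite type 'r of relation symbols together with an
  arity function ar. A sigma-structure with vertices of type 'a is a pair (V, Rel) where
  V is the vertex set and Rel R is the set of tuples (as lists) in relation R.\<close>

type_synonym ('a, 'r) struct = "'a set \<times> ('r \<Rightarrow> 'a list set)"

definition wf_struct :: "('r \<Rightarrow> nat) \<Rightarrow> ('a, 'r) struct \<Rightarrow> bool" where
  "wf_struct ar A \<longleftrightarrow> finite (fst A) \<and> (\<forall>R. finite (snd A R)) \<and>
     (\<forall>R t. t \<in> snd A R \<longrightarrow> length t = ar R \<and> set t \<subseteq> fst A)"

text \<open>Incidence graph: nodes are Inl v (vertices) and Inr (R, t) (blocks); a vertex is
  joined to a block iff it occurs in the tuple. Parallel edges correspond to repeated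
  entries in a tuple and are excluded separately.\<close>

definition inc_nodes :: "('a, 'r) struct \<Rightarrow> ('a + ('r \<times> 'a list)) set" where
  "inc_nodes A = Inl ` fst A \<union> Inr ` {(R, t). t \<in> snd A R}"

definition inc_adj :: "('a, 'r) struct \<Rightarrow> ('a + ('r \<times> 'a list)) \<Rightarrow> ('a + ('r \<times> 'a list)) \<Rightarrow> bool" where
  "inc_adj A u w \<longleftrightarrow> (\<exists>v R t. t \<in> snd A R \<and> v \<in> set t \<and>
      ((u = Inl v \<and> w = Inr (R, t)) \<or> (u = Inr (R, t) \<and> w = Inl v)))"

definition inc_has_cycle :: "('a, 'r) struct \<Rightarrow> bool" where
  "inc_has_cycle A \<longleftrightarrow> (\<exists>cs. length cs \<ge> 3 \<and> distinct cs \<and>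
      (\<forall>i < length cs. inc_adj A (cs ! i) (cs ! ((i + 1) mod length cs))))"

definition inc_parallel :: "('a, 'r) struct \<Rightarrow> bool" where
  "inc_parallel A \<longleftrightarrow> (\<exists>R t. t \<in> snd A R \<and> \<not> distinct t)"

definition inc_connected :: "('a, 'r) struct \<Rightarrow> bool" where
  "inc_connected A \<longleftrightarrow> (\<forall>u \<in> inc_nodes A. \<forall>w \<in> inc_nodes A.
      (u, w) \<in> {(x, y). inc_adj A x y}\<^sup>*)"

definition is_forest :: "('r \<Rightarrow> nat) \<Rightarrow> ('a, 'r) struct \<Rightarrow> bool" where
  "is_forest ar A \<longleftrightarrow> wf_struct ar A \<and> \<not> inc_parallel A \<and> \<not> inc_has_cycle A"

definition is_tree :: "('r \<Rightarrow> nat) \<Rightarrow> ('a, 'r) struct \<Rightarrow> bool" where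
  "is_tree ar A \<longleftrightarrow> is_forest ar A \<and> fst A \<noteq> {} \<and> inc_connected A"

definition is_rforest :: "('r \<Rightarrow> nat) \<Rightarrow> ('a, 'r) struct \<times> 'a \<Rightarrow> bool" where
  "is_rforest ar X \<longleftrightarrow> is_forest ar (fst X) \<and> snd X \<in> fst (fst X)"

definition is_rtree :: "('r \<Rightarrow> nat) \<Rightarrow> ('a, 'r) struct \<times> 'a \<Rightarrow> bool" where
  "is_rtree ar X \<longleftrightarrow> is_tree ar (fst X) \<and> snd X \<in> fst (fst X)"

definition iso :: "('a, 'r) struct \<Rightarrow> ('b, 'r) struct \<Rightarrow> bool" where
  "iso A B \<longleftrightarrow> (\<exists>f. bij_betw f (fst A) (fst B) \<and> (\<forall>R. snd B R = map f ` snd A R))"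

definition riso :: "('a, 'r) struct \<times> 'a \<Rightarrow> ('b, 'r) struct \<times> 'b \<Rightarrow> bool" where
  "riso X Y \<longleftrightarrow> (\<exists>f. bij_betw f (fst (fst X)) (fst (fst Y)) \<and>
      (\<forall>R. snd (fst Y) R = map f ` snd (fst X) R) \<and> f (snd X) = snd Y)"

text \<open>Isomorphism classes are represented by concrete structures on nat.\<close>

definition in_cls :: "(nat, 'r) struct set \<Rightarrow> ('a, 'r) struct \<Rightarrow> bool" where
  "in_cls Ob A \<longleftrightarrow> (\<exists>B \<in> Ob. iso A B)"

definition mem_iso :: "('a, 'r) struct \<times> 'a \<Rightarrow> ((nat, 'r) struct \<times> nat) set \<Rightarrow> bool" where
  "mem_iso X F \<longleftrightarrow> (\<exists>Y \<in> F. riso X Y)"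

text \<open>(A,a) + (B,b): disjoint union with a and b identified, rooted at the identified vertex.\<close>

definition glue :: "('a, 'r) struct \<times> 'a \<Rightarrow> ('b, 'r) struct \<times> 'b \<Rightarrow> ('a + 'b, 'r) struct \<times> ('a + 'b)" where
  "glue X Y = (let A = fst X; a = snd X; B = fst Y; b = snd Y;
                   g = (\<lambda>x. if x = b then Inl a else Inr x)
               in ((Inl ` fst A \<union> g ` fst B,
                    \<lambda>R. map Inl ` snd A R \<union> map g ` snd B R), Inl a))"

definition residual :: "('r \<Rightarrow> nat) \<Rightarrow> (nat, 'r) struct set \<Rightarrow> (nat, 'r) struct \<times> nat
    \<Rightarrow> ((nat, 'r) struct \<times> nat) set" where
  "residual ar Ob X = {Y. is_rforest ar Y \<and> in_cls Ob (fst (glue X Y))}"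

definition regular :: "('r \<Rightarrow> nat) \<Rightarrow> (nat, 'r) struct set \<Rightarrow> bool" where
  "regular ar Ob \<longleftrightarrow> finite (residual ar Ob ` {X. is_rforest ar X})"

definition rtrees :: "('r \<Rightarrow> nat) \<Rightarrow> ((nat, 'r) struct \<times> nat) set" where
  "rtrees ar = {X. is_rtree ar X}"

definition T0 :: "(nat, 'r) struct \<times> nat" where
  "T0 = (({0}, \<lambda>R. {}), 0)"

text \<open>Concatenation C(R,(A_1,x_1),...,(A_r,x_r)); vertex (i,v) is the copy of v in A_i
  (indices 0-based).\<close>

definition concat_s :: "'r \<Rightarrow> (('a, 'r) struct \<times> 'a) list \<Rightarrow> (nat \<times> 'a, 'r) struct" where
  "concat_s R Xs =
     ({(i, v). i < length Xs \<and> v \<in> fst (fst (Xs ! i))},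
      \<lambda>S. {map (Pair i) t | i t. i < length Xs \<and> t \<in> snd (fst (Xs ! i)) S} \<union>
          (if S = R then {map (\<lambda>i. (i, snd (Xs ! i))) [0..<length Xs]} else {}))"

definition D_vertex :: "('r \<Rightarrow> nat) \<Rightarrow> (nat, 'r) struct set \<Rightarrow> ((nat, 'r) struct \<times> nat) set \<Rightarrow> bool" where
  "D_vertex ar Ob V \<longleftrightarrow> T0 \<in> V \<and> (\<forall>X \<in> V. \<not> in_cls Ob (fst X)) \<and>
     (\<exists>H \<subseteq> rtrees ar. V = rtrees ar - \<Union> (residual ar Ob ` H))"

definition D_rel :: "('r \<Rightarrow> nat) \<Rightarrow> (nat, 'r) struct set \<Rightarrow> 'r
    \<Rightarrow> ((nat, 'r) struct \<times> nat) set list \<Rightarrow> bool" where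
  "D_rel ar Ob R Vs \<longleftrightarrow> length Vs = ar R \<and> (\<forall>V \<in> set Vs. D_vertex ar Ob V) \<and>
     (\<forall>Xs. length Xs = length Vs \<longrightarrow> (\<forall>i < length Vs. Xs ! i \<in> Vs ! i) \<longrightarrow>
        (\<forall>j < length Vs. mem_iso (concat_s R Xs, (j, snd (Xs ! j))) (Vs ! j)))"

definition Dstr :: "('r \<Rightarrow> nat) \<Rightarrow> (nat, 'r) struct set \<Rightarrow> (((nat, 'r) struct \<times> nat) set, 'r) struct" where
  "Dstr ar Ob = ({V. D_vertex ar Ob V}, \<lambda>R. {Vs. D_rel ar Ob R Vs})"

definition hom :: "('a, 'r) struct \<Rightarrow> ('b, 'r) struct \<Rightarrow> ('a \<Rightarrow> 'b) \<Rightarrow> bool" where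
  "hom A B f \<longleftrightarrow> (\<forall>x \<in> fst A. f x \<in> fst B) \<and> (\<forall>R t. t \<in> snd A R \<longrightarrow> map f t \<in> snd B R)"

end

theory Submission
  imports Defs
begin

lemma walk_nth:
  "successively P xs \<Longrightarrow> Suc i < length xs \<Longrightarrow> P (xs!i) (xs!Suc i)"
  by (induction P xs arbitrary: i rule: successively.induct) (auto simp: nth_Cons split: nat.splits)

lemma rtrancl_walk:
  assumes "(x,y) \<in> r\<^sup>*"
  shows "\<exists>ps. ps \<noteq> [] \<and> hd ps = x \<and> last ps = y \<and> successively (\<lambda>a b. (a,b) \<in> r) ps"
  using assms
proof (induction rule: rtrancl_induct)
  case base
  then show ?case by (intro exI[of _ "[x]"]) auto
next
  case (step y z)
  then obtain ps where ps: "ps \<noteq> []" "hd ps = x" "last ps = y" "successively (\<lambda>a b. (a,b) \<in> r) ps" by blast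
  show ?case
    by (intro exI[of _ "ps @ [z]"]) (use ps step in \<open>auto simp: successively_append_iff\<close>)
qed

lemma distinct_walk:
  "successively P ps \<Longrightarrow> ps \<noteq> [] \<Longrightarrow> \<exists>qs. distinct qs \<and> qs \<noteq> [] \<and> hd qs = hd ps \<and> last qs = last ps
      \<and> successively P qs"
proof (induction "length ps" arbitrary: ps rule: less_induct)
  case less
  show ?case
  proof (cases "distinct ps")
    case True thus ?thesis using less by blast
  next
    case False
    then obtain xs ys zs y where ps: "ps = xs@[y]@ys@[y]@zs" using not_distinct_decomp by blast
    let ?ps = "xs@[y]@zs"
    have s0: "successively P (xs @ [y])" "successively P (y # zs)"
    proof -
      have "ps = (xs@[y]) @ (ys@[y]@zs)" "ps = (xs@[y]@ys) @ ([y]@zs)" unfolding ps by simp_all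
      then show "successively P (xs @ [y])" "successively P (y # zs)"
        using less.prems(1) successively_append_iff[of P "xs@[y]" "ys@[y]@zs"]
          successively_append_iff[of P "xs@[y]@ys" "[y]@zs"] by auto
    qed
    have s: "successively P ?ps" using s0 by (auto simp: successively_append_iff)
    have h: "hd ?ps = hd ps" "last ?ps = last ps" unfolding ps by (cases xs; cases zs; simp)+
    have "length ?ps < length ps" unfolding ps by simp
    from less.hyps[OF this s] h show ?thesis by auto
  qed
qed

lemma inc_adj_sym: "inc_adj A u w = inc_adj A w u"
  unfolding inc_adj_def by blast

definition Gp :: "('a,'r) struct \<Rightarrow> 'r \<Rightarrow> 'a list \<Rightarrow> (('a + 'r \<times> 'a list) \<times> ('a + 'r \<times> 'a list)) set" where
  "Gp A R t = {(u,w). inc_adj A u w \<and> u \<noteq> Inr (R,t) \<and> w \<noteq> Inr (R,t)}"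

definition subA :: "('a,'r) struct \<Rightarrow> 'r \<Rightarrow> 'a list \<Rightarrow> 'a \<Rightarrow> ('a,'r) struct" where
  "subA A R t x = ({v. (Inl x, Inl v) \<in> (Gp A R t)\<^sup>*},
      \<lambda>S. {s \<in> snd A S. (Inl x, Inr (S,s)) \<in> (Gp A R t)\<^sup>*})"

lemma Gp_sym: "(u,w) \<in> (Gp A R t)\<^sup>* \<Longrightarrow> (w,u) \<in> (Gp A R t)\<^sup>*"
proof -
  assume a: "(u,w) \<in> (Gp A R t)\<^sup>*"
  have c: "(Gp A R t)\<inverse> = Gp A R t" unfolding Gp_def using inc_adj_sym by blast
  have "(w,u) \<in> ((Gp A R t)\<inverse>)\<^sup>*" using rtrancl_converseI[OF a] .
  then show ?thesis using c by simp
qed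

lemma Gp_not_blk: "(u,w) \<in> (Gp A R t)\<^sup>* \<Longrightarrow> u \<noteq> Inr (R,t) \<Longrightarrow> w \<noteq> Inr (R,t)"
  by (erule rtranclE) (auto simp: Gp_def)

lemma adj_nodes: "wf_struct ar A \<Longrightarrow> inc_adj A y z \<Longrightarrow> z \<in> inc_nodes A"
  unfolding wf_struct_def inc_adj_def inc_nodes_def by blast

lemma reach_nodes: "wf_struct ar A \<Longrightarrow> x \<in> fst A \<Longrightarrow> (Inl x, u) \<in> (Gp A R t)\<^sup>* \<Longrightarrow> u \<in> inc_nodes A"
  by (erule rtranclE) (auto simp: Gp_def inc_nodes_def dest: adj_nodes)

lemma acyc:
  assumes F: "is_forest ar A" and tin: "t \<in> snd A R" and ik: "i < length t" "k < length t"
    and r: "(Inl (t!i), Inl (t!k)) \<in> (Gp A R t)\<^sup>*"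
  shows "i = k"
proof (rule ccontr)
  assume ne: "i \<noteq> k"
  have dt: "distinct t" using F tin unfolding is_forest_def inc_parallel_def by blast
  have ne2: "t!i \<noteq> t!k" using dt ik ne nth_eq_iff_index_eq by blast
  obtain ps where "ps \<noteq> []" "hd ps = Inl (t!i)" "last ps = Inl (t!k)"
    "successively (\<lambda>a b. (a,b) \<in> Gp A R t) ps" using rtrancl_walk[OF r] by blast
  then obtain qs where qs: "distinct qs" "qs \<noteq> []" "hd qs = Inl (t!i)" "last qs = Inl (t!k)"
    "successively (\<lambda>a b. (a,b) \<in> Gp A R t) qs" using distinct_walk by metis
  have l2: "length qs \<ge> 2"
  proof (rule ccontr)
    assume "\<not> length qs \<ge> 2"
    with qs(2) have "length qs = 1" by (cases qs) (auto simp: Suc_le_eq)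
    then obtain z where "qs = [z]" by (cases qs) auto
    with qs ne2 show False by simp
  qed
  have ed: "(qs!m, qs!Suc m) \<in> Gp A R t" if "Suc m < length qs" for m
    using walk_nth[OF qs(5) that] .
  have notin: "Inr (R,t) \<notin> set qs"
  proof
    assume "Inr (R,t) \<in> set qs"
    then obtain m where m: "m < length qs" "qs!m = Inr (R,t)" by (auto simp: in_set_conv_nth)
    show False
    proof (cases "Suc m < length qs")
      case True then show False using ed[OF True] m by (auto simp: Gp_def)
    next
      case False
      then have "m = Suc (m - 1)" "Suc (m-1) < length qs" using m l2 by auto
      then show False using ed[of "m-1"] m by (auto simp: Gp_def)
    qed
  qed
  define cs where "cs = qs @ [Inr (R,t)]"
  have "inc_has_cycle A"
    unfolding inc_has_cycle_def
  proof (intro exI[of _ cs] conjI allI impI)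
    show "3 \<le> length cs" using l2 by (simp add: cs_def)
    show "distinct cs" using qs(1) notin by (simp add: cs_def)
    fix m assume m: "m < length cs"
    show "inc_adj A (cs ! m) (cs ! ((m + 1) mod length cs))"
    proof (cases "Suc m < length qs")
      case True
      then have "(m+1) mod length cs = Suc m" using m by (simp add: cs_def)
      then show ?thesis using ed[OF True] True by (simp add: cs_def nth_append Gp_def)
    next
      case False
      show ?thesis
      proof (cases "Suc m = length qs")
        case True
        then have "(m+1) mod length cs = length qs" using m by (simp add: cs_def)
        moreover have "m = length qs - 1" using True by simp
        then have "cs ! m = Inl (t!k)" using True qs(2,4) by (simp add: cs_def nth_append last_conv_nth)
        moreover have "t!k \<in> set t" using ik by simp
        ultimately show ?thesis using tin by (auto simp: cs_def inc_adj_def)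
      next
        case False
        then have "m = length qs" using m \<open>\<not> Suc m < length qs\<close> by (simp add: cs_def)
        then have "(m+1) mod length cs = 0" "cs ! m = Inr (R,t)" by (simp_all add: cs_def)
        moreover have "cs ! 0 = Inl (t!i)" using qs(2,3) by (simp add: cs_def nth_append hd_conv_nth)
        moreover have "t!i \<in> set t" using ik by simp
        ultimately show ?thesis using tin by (auto simp: inc_adj_def)
      qed
    qed
  qed
  then show False using F unfolding is_forest_def by blast
qed

lemma uniq_comp:
  assumes F: "is_forest ar A" and tin: "t \<in> snd A R" and ik: "i < length t" "k < length t"
    and r: "(Inl (t!i), u) \<in> (Gp A R t)\<^sup>*" "(Inl (t!k), u) \<in> (Gp A R t)\<^sup>*"
  shows "i = k"
proof -
  have "(Inl (t!i), Inl (t!k)) \<in> (Gp A R t)\<^sup>*" using r(1) Gp_sym[OF r(2)] by simp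
  then show ?thesis using acyc[OF F tin ik] by blast
qed

lemma cover:
  assumes T: "is_tree ar A" and tin: "t \<in> snd A R" and u: "u \<in> inc_nodes A" "u \<noteq> Inr (R,t)"
  shows "\<exists>i<length t. (Inl (t!i), u) \<in> (Gp A R t)\<^sup>*"
proof -
  have "Inr (R,t) \<in> inc_nodes A" using tin by (auto simp: inc_nodes_def)
  then have "(Inr (R,t), u) \<in> {(x, y). inc_adj A x y}\<^sup>*"
    using T u unfolding is_tree_def inc_connected_def by blast
  then have "u = Inr (R,t) \<or> (\<exists>i<length t. (Inl (t!i), u) \<in> (Gp A R t)\<^sup>*)"
  proof (induction rule: rtrancl_induct)
    case base then show ?case by simp
  next
    case (step y z)
    have adj: "inc_adj A y z" using step by simp
    from step.IH show ?case
    proof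
      assume y: "y = Inr (R,t)"
      then obtain v where "z = Inl v" "v \<in> set t" using adj unfolding inc_adj_def by auto
      then show ?thesis by (auto simp: in_set_conv_nth)
    next
      assume "\<exists>i<length t. (Inl (t!i), y) \<in> (Gp A R t)\<^sup>*"
      then obtain i where i: "i < length t" "(Inl (t!i), y) \<in> (Gp A R t)\<^sup>*" by blast
      have yn: "y \<noteq> Inr (R,t)" using Gp_not_blk[OF i(2)] by simp
      show ?thesis
      proof (cases "z = Inr (R,t)")
        case False
        then have "(y,z) \<in> Gp A R t" using adj yn by (simp add: Gp_def)
        then show ?thesis using i by (meson rtrancl_into_rtrancl)
      qed simp
    qed
  qed
  then show ?thesis using u by blast
qed

lemma has_cycle_mono:
  assumes "\<And>S. snd B S \<subseteq> snd A S" "inc_has_cycle B" shows "inc_has_cycle A"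
proof -
  have "inc_adj B u w \<Longrightarrow> inc_adj A u w" for u w using assms(1) unfolding inc_adj_def by blast
  then show ?thesis using assms(2) unfolding inc_has_cycle_def by blast
qed

lemma subA_sub:
  assumes T: "is_tree ar A" and x: "x \<in> fst A"
  shows "fst (subA A R t x) \<subseteq> fst A" "snd (subA A R t x) S \<subseteq> snd A S"
proof -
  have W: "wf_struct ar A" using T by (simp add: is_tree_def is_forest_def)
  show "fst (subA A R t x) \<subseteq> fst A"
    using reach_nodes[OF W x] by (auto simp: subA_def inc_nodes_def)
  show "snd (subA A R t x) S \<subseteq> snd A S" by (auto simp: subA_def)
qed

lemma subA_tuple_set:
  assumes "s \<in> snd (subA A R t x) S" "v \<in> set s"
  shows "v \<in> fst (subA A R t x)"
proof -
  have r: "(Inl x, Inr (S,s)) \<in> (Gp A R t)\<^sup>*" "s \<in> snd A S" using assms(1) by (auto simp: subA_def)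
  have "Inr (S,s) \<noteq> Inr (R,t)" using Gp_not_blk[OF r(1)] by simp
  then have "(Inr (S,s), Inl v) \<in> Gp A R t" using r(2) assms(2) by (auto simp: Gp_def inc_adj_def)
  then show ?thesis using r(1) by (auto simp: subA_def intro: rtrancl_into_rtrancl)
qed

lemma subA_notin: "t \<notin> snd (subA A R t x) R"
  using Gp_not_blk[of "Inl x" "Inr (R,t)" A R t] by (auto simp: subA_def)

lemma subA_reach:
  assumes "(Inl x, u) \<in> (Gp A R t)\<^sup>*"
  shows "(Inl x, u) \<in> {(a,b). inc_adj (subA A R t x) a b}\<^sup>*"
  using assms
proof (induction rule: rtrancl_induct)
  case base then show ?case by simp
next
  case (step y z)
  have yz: "inc_adj A y z" "y \<noteq> Inr (R,t)" "z \<noteq> Inr (R,t)" using step(2) by (auto simp: Gp_def)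
  have rz: "(Inl x, z) \<in> (Gp A R t)\<^sup>*" using step(1,2) by (rule rtrancl_into_rtrancl)
  have "inc_adj (subA A R t x) y z"
    using yz(1) step(1) rz unfolding inc_adj_def subA_def by auto
  then show ?case using step(3) by (simp add: rtrancl_into_rtrancl)
qed

lemma subA_tree:
  assumes T: "is_tree ar A" and x: "x \<in> fst A"
  shows "is_tree ar (subA A R t x)"
proof -
  let ?B = "subA A R t x"
  have W: "wf_struct ar A" using T by (simp add: is_tree_def is_forest_def)
  have sub: "fst ?B \<subseteq> fst A" "\<And>S. snd ?B S \<subseteq> snd A S" using subA_sub[OF T x] by auto
  have fA: "finite (fst A)" "\<And>S. finite (snd A S)"
    and lA: "\<And>S s. s \<in> snd A S \<Longrightarrow> length s = ar S" using W unfolding wf_struct_def by blast+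
  have wB: "wf_struct ar ?B"
    unfolding wf_struct_def
  proof (intro conjI allI impI)
    show "finite (fst ?B)" using finite_subset[OF sub(1) fA(1)] .
    fix S show "finite (snd ?B S)" using finite_subset[OF sub(2) fA(2)] .
  next
    fix S s assume s: "s \<in> snd ?B S"
    then show "length s = ar S" using lA sub(2) by blast
    show "set s \<subseteq> fst ?B" using subA_tuple_set[OF s] by blast
  qed
  have npA: "\<not> inc_parallel A" and ncA: "\<not> inc_has_cycle A"
    using T by (simp_all add: is_tree_def is_forest_def)
  have np: "\<not> inc_parallel ?B" using npA sub(2) unfolding inc_parallel_def by blast
  have nc: "\<not> inc_has_cycle ?B" using ncA has_cycle_mono[OF sub(2)] by blast
  have ne: "x \<in> fst ?B" by (simp add: subA_def)
  have reach: "(Inl x, u) \<in> {(a,b). inc_adj ?B a b}\<^sup>*" if "u \<in> inc_nodes ?B" for u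
  proof -
    have "(Inl x, u) \<in> (Gp A R t)\<^sup>*" using that unfolding inc_nodes_def subA_def by auto
    then show ?thesis by (rule subA_reach)
  qed
  have symm: "(b, a) \<in> {(a,b). inc_adj ?B a b}\<^sup>*" if "(a, b) \<in> {(a,b). inc_adj ?B a b}\<^sup>*" for a b
  proof -
    have c: "{(a,b). inc_adj ?B a b}\<inverse> = {(a,b). inc_adj ?B a b}" using inc_adj_sym by blast
    show ?thesis using rtrancl_converseI[OF that] c by simp
  qed
  have "inc_connected ?B" unfolding inc_connected_def
  proof (intro ballI)
    fix u w assume "u \<in> inc_nodes ?B" "w \<in> inc_nodes ?B"
    then have "(u, Inl x) \<in> {(a,b). inc_adj ?B a b}\<^sup>*" "(Inl x, w) \<in> {(a,b). inc_adj ?B a b}\<^sup>*"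
      using reach symm by blast+
    then show "(u, w) \<in> {(a,b). inc_adj ?B a b}\<^sup>*" by (rule rtrancl_trans)
  qed
  then show ?thesis using wB np nc ne unfolding is_tree_def is_forest_def by blast
qed

lemma riso_trans: "riso X Y \<Longrightarrow> riso Y Z \<Longrightarrow> riso X Z"
  unfolding riso_def
proof (elim exE conjE)
  fix f g
  assume f: "bij_betw f (fst (fst X)) (fst (fst Y))" "\<forall>R. snd (fst Y) R = map f ` snd (fst X) R" "f (snd X) = snd Y"
    and g: "bij_betw g (fst (fst Y)) (fst (fst Z))" "\<forall>R. snd (fst Z) R = map g ` snd (fst Y) R" "g (snd Y) = snd Z"
  show "\<exists>h. bij_betw h (fst (fst X)) (fst (fst Z)) \<and> (\<forall>R. snd (fst Z) R = map h ` snd (fst X) R) \<and> h (snd X) = snd Z"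
  proof (intro exI[of _ "g \<circ> f"] conjI allI)
    show "bij_betw (g \<circ> f) (fst (fst X)) (fst (fst Z))" using bij_betw_trans[OF f(1) g(1)] .
    fix R show "snd (fst Z) R = map (g \<circ> f) ` snd (fst X) R" using f(2) g(2) by (simp add: image_image)
  next
    show "(g \<circ> f) (snd X) = snd Z" using f(3) g(3) by simp
  qed
qed

definition tup :: "('a,'r) struct \<Rightarrow> ('r \<times> 'a list) set" where
  "tup A = Sigma UNIV (snd A)"

lemma main:
  fixes ar :: "'r::finite \<Rightarrow> nat"
    and Ob :: "(nat, 'r) struct set"
    and A :: "('a, 'r) struct"
    and \<phi> :: "'a \<Rightarrow> ((nat, 'r) struct \<times> nat) set"
  assumes "card (tup A) = n" "is_tree ar A" "hom A (Dstr ar Ob) \<phi>" "a \<in> fst A"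
  shows "mem_iso (A, a) (\<phi> a)"
  using assms
proof (induction n arbitrary: A a rule: less_induct)
  case (less n A a)
  have T: "is_tree ar A" and H: "hom A (Dstr ar Ob) \<phi>" and a: "a \<in> fst A" using less.prems by auto
  have W: "wf_struct ar A" using T by (simp add: is_tree_def is_forest_def)
  have finA: "finite (tup A)" using W unfolding tup_def wf_struct_def by (simp add: finite_SigmaI)
  have con: "\<And>u w. u \<in> inc_nodes A \<Longrightarrow> w \<in> inc_nodes A \<Longrightarrow> (u, w) \<in> {(x, y). inc_adj A x y}\<^sup>*"
    using T unfolding is_tree_def inc_connected_def by blast
  have T0in: "T0 \<in> \<phi> a" using H a unfolding hom_def Dstr_def D_vertex_def by auto
  show ?case
  proof (cases "\<forall>S. snd A S = {}")
    case True
    have "{(x, y). inc_adj A x y} = {}" using True unfolding inc_adj_def by auto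
    then have single: "v = a" if "v \<in> fst A" for v
      using con[of "Inl a" "Inl v"] that a by (auto simp: inc_nodes_def)
    have "riso (A, a) T0"
      unfolding riso_def T0_def
    proof (intro exI[of _ "\<lambda>_. 0::nat"] conjI allI)
      have "fst A = {a}" using single a by blast
      then show "bij_betw (\<lambda>_. 0::nat) (fst (fst (A, a))) (fst (fst (({0}, \<lambda>R. {}), 0::nat)))"
        by (simp add: bij_betw_def)
    qed (use True in auto)
    then show ?thesis using T0in unfolding mem_iso_def by blast
  next
    case False
    then obtain S0 s0 where s0: "s0 \<in> snd A S0" by blast
    have "(Inl a, Inr (S0,s0)) \<in> {(x, y). inc_adj A x y}\<^sup>*"
      using con s0 a by (auto simp: inc_nodes_def)
    then obtain y where "inc_adj A (Inl a) y" by (rule converse_rtranclE) auto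
    then obtain R t where tin: "t \<in> snd A R" and "a \<in> set t" unfolding inc_adj_def by auto
    then obtain j where j: "j < length t" "t!j = a" by (auto simp: in_set_conv_nth)
    define r where "r = length t"
    define B where "B i = subA A R t (t!i)" for i
    have tfst: "t!i \<in> fst A" if "i < r" for i using W tin that unfolding wf_struct_def r_def by (metis nth_mem subsetD)
    have Bsub: "fst (B i) \<subseteq> fst A" "snd (B i) S \<subseteq> snd A S" if "i < r" for i S
      using subA_sub[OF T tfst[OF that]] unfolding B_def by auto
    have IH: "mem_iso (B i, t!i) (\<phi> (t!i))" if i: "i < r" for i
    proof -
      have "tup (B i) \<subseteq> tup A" using Bsub[OF i] unfolding tup_def by auto
      moreover have "(R,t) \<in> tup A - tup (B i)" using tin subA_notin[of t A R "t!i"] unfolding tup_def B_def by auto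
      ultimately have "tup (B i) \<subset> tup A" by blast
      then have "card (tup (B i)) < n" using psubset_card_mono[OF finA] less.prems(1) by simp
      moreover have "is_tree ar (B i)" unfolding B_def using subA_tree[OF T tfst[OF i]] .
      moreover have "hom (B i) (Dstr ar Ob) \<phi>" using H Bsub[OF i] unfolding hom_def by blast
      moreover have "t!i \<in> fst (B i)" by (simp add: B_def subA_def)
      ultimately show ?thesis using less.IH by blast
    qed
    have "\<forall>i<r. \<exists>Y g. Y \<in> \<phi> (t!i) \<and> bij_betw g (fst (B i)) (fst (fst Y)) \<and>
        (\<forall>S. snd (fst Y) S = map g ` snd (B i) S) \<and> g (t!i) = snd Y"
      using IH unfolding mem_iso_def riso_def fst_conv snd_conv by blast
    then obtain Y g where Yg: "\<And>i. i < r \<Longrightarrow> Y i \<in> \<phi> (t!i) \<and> bij_betw (g i) (fst (B i)) (fst (fst (Y i))) \<and>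
        (\<forall>S. snd (fst (Y i)) S = map (g i) ` snd (B i) S) \<and> g i (t!i) = snd (Y i)" by metis
    have Ymem: "Y i \<in> \<phi> (t!i)" and gbij: "bij_betw (g i) (fst (B i)) (fst (fst (Y i)))"
      and gtup: "\<And>S. snd (fst (Y i)) S = map (g i) ` snd (B i) S" and groot: "g i (t!i) = snd (Y i)"
      if "i < r" for i using Yg[OF that] by auto
    define Ys where "Ys = map Y [0..<r]"
    have "map \<phi> t \<in> snd (Dstr ar Ob) R" using H tin unfolding hom_def by blast
    then have DR: "D_rel ar Ob R (map \<phi> t)" by (simp add: Dstr_def)
    have "mem_iso (concat_s R Ys, (j, snd (Ys ! j))) (map \<phi> t ! j)"
    proof -
      have all: "\<forall>Xs. length Xs = length t \<longrightarrow> (\<forall>i<length t. Xs ! i \<in> \<phi> (t ! i)) \<longrightarrow>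
            (\<forall>j<length t. mem_iso (concat_s R Xs, j, snd (Xs ! j)) (\<phi> (t ! j)))"
        using DR unfolding D_rel_def by simp
      have "length Ys = length t" "\<forall>i<length t. Ys ! i \<in> \<phi> (t ! i)"
        using Ymem by (auto simp: Ys_def r_def)
      then show ?thesis using all j(1) by simp
    qed
    then obtain Z where Z: "Z \<in> \<phi> a" "riso (concat_s R Ys, (j, snd (Y j))) Z"
      using j unfolding mem_iso_def by (auto simp: Ys_def r_def)
    have ex1: "\<exists>i. i < r \<and> v \<in> fst (B i)" if v: "v \<in> fst A" for v
    proof -
      have "Inl v \<in> inc_nodes A" using v by (simp add: inc_nodes_def)
      then obtain i where "i < length t" "(Inl (t!i), Inl v) \<in> (Gp A R t)\<^sup>*"
        using cover[OF T tin] by blast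
      then show ?thesis by (auto simp: B_def subA_def r_def)
    qed
    have F: "is_forest ar A" using T by (simp add: is_tree_def)
    have un: "i = k" if "i < r" "k < r" "(Inl (t!i), u) \<in> (Gp A R t)\<^sup>*" "(Inl (t!k), u) \<in> (Gp A R t)\<^sup>*" for i k u
      using uniq_comp[OF F tin] that unfolding r_def by blast
    define c where "c v = (THE i. i < r \<and> v \<in> fst (B i))" for v
    have c_eq: "c v = i" if "i < r" "v \<in> fst (B i)" for v i
      unfolding c_def
    proof (rule the_equality)
      show "i < r \<and> v \<in> fst (B i)" using that by simp
      fix k assume "k < r \<and> v \<in> fst (B k)"
      then show "k = i" using un[of k i "Inl v"] that by (auto simp: B_def subA_def)
    qed
    have c_prop: "c v < r \<and> v \<in> fst (B (c v))" if "v \<in> fst A" for v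
      using ex1[OF that] c_eq by metis
    define f where "f v = (c v, g (c v) v)" for v
    have fstC: "fst (concat_s R Ys) = {(i,v). i < r \<and> v \<in> fst (fst (Y i))}"
      by (auto simp: concat_s_def Ys_def)
    have e1: "Ys ! i = Y i" if "i < r" for i using that by (simp add: Ys_def)
    have lY: "length Ys = r" by (simp add: Ys_def)
    have mY: "map (\<lambda>i. (i, snd (Ys ! i))) [0..<r] = map (\<lambda>i. (i, snd (Y i))) [0..<r]"
      using e1 by simp
    have sndC: "snd (concat_s R Ys) S = (\<Union>i<r. map (Pair i) ` snd (fst (Y i)) S) \<union>
        (if S = R then {map (\<lambda>i. (i, snd (Y i))) [0..<r]} else {})" for S
    proof -
      have "snd (concat_s R Ys) S = {map (Pair i) s | i s. i < r \<and> s \<in> snd (fst (Ys ! i)) S} \<union>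
        (if S = R then {map (\<lambda>i. (i, snd (Ys ! i))) [0..<r]} else {})"
        by (simp add: concat_s_def lY)
      also have "{map (Pair i) s | i s. i < r \<and> s \<in> snd (fst (Ys ! i)) S} = (\<Union>i<r. map (Pair i) ` snd (fst (Ys ! i)) S)"
        by blast
      also have "\<dots> = (\<Union>i<r. map (Pair i) ` snd (fst (Y i)) S)" using e1 by simp
      finally show ?thesis unfolding mY .
    qed
    have tupA: "snd A S = (\<Union>i<r. snd (B i) S) \<union> (if S = R then {t} else {})" for S
    proof (rule equalityI)
      show "snd A S \<subseteq> (\<Union>i<r. snd (B i) S) \<union> (if S = R then {t} else {})"
      proof
        fix s assume s: "s \<in> snd A S"
        show "s \<in> (\<Union>i<r. snd (B i) S) \<union> (if S = R then {t} else {})"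
        proof (cases "S = R \<and> s = t")
          case False
          have n1: "Inr (S,s) \<in> inc_nodes A" using s by (auto simp: inc_nodes_def)
          have n2: "Inr (S,s) \<noteq> Inr (R,t)" using False by auto
          obtain i where "i < length t" "(Inl (t!i), Inr (S,s)) \<in> (Gp A R t)\<^sup>*"
            using cover[OF T tin n1 n2] by blast
          then have "i < r" "s \<in> snd (B i) S" using s unfolding B_def subA_def r_def by simp_all
          then show ?thesis by blast
        next
          case True then show ?thesis by simp
        qed
      qed
      show "(\<Union>i<r. snd (B i) S) \<union> (if S = R then {t} else {}) \<subseteq> snd A S"
      proof -
        have "(\<Union>i<r. snd (B i) S) \<subseteq> snd A S" using Bsub(2) by blast
        moreover have "(if S = R then {t} else {}) \<subseteq> snd A S" using tin by simp
        ultimately show ?thesis by blast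
      qed
    qed
    have mapB: "map f s = map (Pair i) (map (g i) s)" if "i < r" "s \<in> snd (B i) S" for i s S
    proof -
      have "v \<in> fst (B i)" if "v \<in> set s" for v
        using subA_tuple_set[of s A R t "t!i" S v] \<open>s \<in> snd (B i) S\<close> that by (simp add: B_def)
      then show ?thesis using c_eq[OF \<open>i < r\<close>] by (simp add: f_def)
    qed
    have tB: "t!k \<in> fst (B k)" for k by (simp add: B_def subA_def)
    have mapt: "map f t = map (\<lambda>i. (i, snd (Y i))) [0..<r]"
    proof (rule nth_equalityI)
      show "length (map f t) = length (map (\<lambda>i. (i, snd (Y i))) [0..<r])" by (simp add: r_def)
      fix k assume "k < length (map f t)"
      then have k: "k < r" by (simp add: r_def)
      show "map f t ! k = map (\<lambda>i. (i, snd (Y i))) [0..<r] ! k"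
        using k c_eq[OF k tB] groot[OF k] by (simp add: f_def r_def)
    qed
    have "riso (A, a) (concat_s R Ys, (j, snd (Y j)))"
      unfolding riso_def fst_conv snd_conv
    proof (intro exI[of _ f] conjI allI)
      show "bij_betw f (fst A) (fst (concat_s R Ys))"
        unfolding bij_betw_def fstC
      proof
        show "inj_on f (fst A)"
        proof (rule inj_onI)
          fix v w assume v: "v \<in> fst A" and w: "w \<in> fst A" and e: "f v = f w"
          then have cc: "c v = c w" and gg: "g (c v) v = g (c v) w" by (auto simp: f_def)
          have "inj_on (g (c v)) (fst (B (c v)))" using gbij c_prop[OF v] by (simp add: bij_betw_def)
          then show "v = w" using gg c_prop[OF v] c_prop[OF w] cc by (metis inj_onD)
        qed
        show "f ` fst A = {(i,v). i < r \<and> v \<in> fst (fst (Y i))}"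
        proof
          show "f ` fst A \<subseteq> {(i,v). i < r \<and> v \<in> fst (fst (Y i))}"
          proof
            fix z assume "z \<in> f ` fst A"
            then obtain v where v: "v \<in> fst A" "z = f v" by blast
            have "g (c v) v \<in> fst (fst (Y (c v)))"
              using gbij[of "c v"] c_prop[OF v(1)] bij_betwE by blast
            then show "z \<in> {(i,v). i < r \<and> v \<in> fst (fst (Y i))}" using v c_prop[OF v(1)] by (simp add: f_def)
          qed
          show "{(i,v). i < r \<and> v \<in> fst (fst (Y i))} \<subseteq> f ` fst A"
          proof
            fix z assume "z \<in> {(i,v). i < r \<and> v \<in> fst (fst (Y i))}"
            then obtain i y where z: "z = (i,y)" "i < r" "y \<in> fst (fst (Y i))" by blast
            then obtain v where v: "v \<in> fst (B i)" "y = g i v"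
              using gbij[OF z(2)] by (metis bij_betw_def imageE)
            have "c v = i" using c_eq[OF z(2) v(1)] .
            moreover have "v \<in> fst A" using Bsub[OF z(2)] v(1) by blast
            ultimately show "z \<in> f ` fst A" using z v by (auto simp: f_def intro!: image_eqI[of _ _ v])
          qed
        qed
      qed
    next
      fix S
      have "map f ` snd A S = (\<Union>i<r. map f ` snd (B i) S) \<union> (if S = R then {map f t} else {})"
        by (subst tupA) auto
      also have "\<dots> = (\<Union>i<r. map (Pair i) ` snd (fst (Y i)) S) \<union> (if S = R then {map (\<lambda>i. (i, snd (Y i))) [0..<r]} else {})"
      proof -
        have "map f ` snd (B i) S = map (Pair i) ` snd (fst (Y i)) S" if "i < r" for i
        proof -
          have "map f ` snd (B i) S = (\<lambda>s. map (Pair i) (map (g i) s)) ` snd (B i) S"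
            by (rule image_cong[OF refl mapB[OF that]])
          then show ?thesis by (simp only: gtup[OF that] image_image)
        qed
        then show ?thesis using mapt by auto
      qed
      also have "\<dots> = snd (concat_s R Ys) S" unfolding sndC ..
      finally show "snd (concat_s R Ys) S = map f ` snd A S" by simp
    next
      show "f a = (j, snd (Y j))"
        using c_eq[OF _ tB[of j]] j groot[of j] by (simp add: f_def r_def)
    qed
    then have "riso (A, a) Z" using Z(2) by (rule riso_trans)
    then show ?thesis using Z(1) unfolding mem_iso_def by blast
  qed
qed

theorem lemma4p2:
  fixes ar :: "'r::finite \<Rightarrow> nat"
    and Ob :: "(nat, 'r) struct set"
    and A :: "('a, 'r) struct"
    and \<phi> :: "'a \<Rightarrow> ((nat, 'r) struct \<times> nat) set"
  assumes "\<forall>B \<in> Ob. is_tree ar B"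
    and "regular ar Ob"
    and "is_tree ar A"
    and "hom A (Dstr ar Ob) \<phi>"
    and "a \<in> fst A"
  shows "mem_iso (A, a) (\<phi> a)"
  using main[OF refl assms(3,4,5)] .

end
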